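(* Let $\mathcal{X}\subseteq\mathbb{R}^D$ be compact with $\lambda_D(\mathcal{X})>0$, and let $f$ be Lipschitz continuous with respect to the metrics induced by $\|\cdot\|_{\mathcal{Y}}$ and $\|\cdot\|_{\mathcal{X}_0}$. For a fixed architecture $\{N_l\}_{l=1}^L$, the function $p$ is integrable on $\bar{\mathcal{X}}=\mathcal{X}^{2\bar N}$ and $\int_{\bar{\mathcal{X}}}p\,d\lambda_{\bar D}=1$; consequently $P$ is a valid probability distribution.
   Context: $\lambda_k$ denotes $k$-dimensional Lebesgue measure. $f\colon\mathbb{R}^D\to\mathbb{R}^{N_{L+1}}$; $\|\cdot\|_{\mathcal{X}_0}$ is a norm on $\mathbb{R}^D$, $\|\cdot\|_{\mathcal{Y}}$ a norm on $\mathbb{R}^{N_{L+1}}$, and $\|\cdot\|_{\mathcal{X}_{l-1}}$ a norm on $\mathbb{R}^{N_{l-1}}$ for $l=2,\dots,L$. Let $\bar N=\sum_{l=1}^LN_l$, $\bar N_l=\sum_{k=1}^lN_k$ ($\bar N_0=0$), $\bar D=2\bar ND$, $\bar{\mathcal{X}}=\mathcal{X}^{2\bar N}$. Sampled network: fix an activation $\phi$ (continuous) and constants $s_1,s_2$; given pairs of points in $\mathcal{X}$ for layers $1,\dots,l-1$, the network $\Phi^{(0)}(x)=x$, $\Phi^{(k)}(x)=\phi(W_k\Phi^{(k-1)}(x)-b_k)$ has rows $w_{k,i}=s_1\frac{x^{(2)}_{k-1,i}-x^{(1)}_{k-1,i}}{\|x^{(2)}_{k-1,i}-x^{(1)}_{k-1,i}\|^2}$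 and biases $b_{k,i}=\langle w_{k,i},x^{(1)}_{k-1,i}\rangle+s_2$, where $x^{(j)}_{k-1,i}=\Phi^{(k-1)}(x^{(j)}_{0,i})$ for the $i$-th pair $(x^{(1)}_{0,i},x^{(2)}_{0,i})$ of layer $k$. Layer densities: for $l=1,\dots,L$, with $\epsilon_1=0$ and $\epsilon_l=\epsilon>0$ for $l\ge2$, given the set $X_{l-1}$ of the $2\bar N_{l-1}$ points of the earlier layers (defining $\Phi^{(l-1)}$), let $q_l(x^{(1)},x^{(2)}\mid X_{l-1})=\frac{\|f(x^{(2)})-f(x^{(1)})\|_{\mathcal{Y}}}{\max\{\|\Phi^{(l-1)}(x^{(2)})-\Phi^{(l-1)}(x^{(1)})\|_{\mathcal{X}_{l-1}},\epsilon_l\}}$ if $\Phi^{(l-1)}(x^{(1)})\neq\Phi^{(l-1)}(x^{(2)})$ and $0$ otherwise, for $x^{(1)},x^{(2)}\in\mathcal{X}$; $C_l=\int_{\mathcal{X}\times\mathcal{X}}q_l\,d\lambda_{2D}$; $p_l=q_l/C_l$ if $C_l>0$, else $p_l=1/\lambda_{2D}(\mathcal{X}\times\mathcal{X})$. Joint density: ordering all points as $x^{(1)}_1,x^{(2)}_1,\dots,x^{(1)}_{\bar N},x^{(2)}_{\bar N}$, set $p=\prod_{l=1}^L\prod_{i=1}^{N_l}p_l(x^{(1)}_{\bar N_{l-1}+i},x^{(2)}_{\bar N_{l-1}+i}\mid X_{l-1})$, with $X_{l-1}$ the points of layers $1,\dots,l-1$; $P$ is the measure on $\bar{\mathcal{X}}$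 with density $p$. *)

theory Defs
  imports "HOL-Analysis.Analysis" "HOL-Probability.Probability"
begin

definition is_norm_on :: "'v::real_vector set \<Rightarrow> ('v \<Rightarrow> real) \<Rightarrow> bool" where
  "is_norm_on V n \<longleftrightarrow>
     (\<forall>x\<in>V. 0 \<le> n x \<and> (n x = 0 \<longleftrightarrow> x = 0)) \<and>
     (\<forall>x\<in>V. \<forall>y\<in>V. n (x + y) \<le> n x + n y) \<and>
     (\<forall>c. \<forall>x\<in>V. n (c *\<^sub>R x) = \<bar>c\<bar> * n x)"

text \<open>Hidden-layer vectors in R^n are represented as functions nat => real vanishing from index n on.
  A norm on R^n in this representation:\<close>
definition is_norm_fin :: "nat \<Rightarrow> ((nat \<Rightarrow> real) \<Rightarrow> real) \<Rightarrow> bool" where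
  "is_norm_fin n nrm \<longleftrightarrow>
     (let V = {v :: nat \<Rightarrow> real. \<forall>j\<ge>n. v j = 0} in
     (\<forall>x\<in>V. 0 \<le> nrm x \<and> (nrm x = 0 \<longleftrightarrow> x = (\<lambda>_. 0))) \<and>
     (\<forall>x\<in>V. \<forall>y\<in>V. nrm (\<lambda>j. x j + y j) \<le> nrm x + nrm y) \<and>
     (\<forall>c. \<forall>x\<in>V. nrm (\<lambda>j. c * x j) = \<bar>c\<bar> * nrm x))"

definition Nb :: "(nat \<Rightarrow> nat) \<Rightarrow> nat \<Rightarrow> nat" where
  "Nb N l = (\<Sum>k\<in>{1..l}. N k)"

definition w_in :: "real \<Rightarrow> 'a::euclidean_space \<Rightarrow> 'a \<Rightarrow> 'a" where
  "w_in s1 a b = (s1 / (norm (b - a))\<^sup>2) *\<^sub>R (b - a)"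

definition neuron_in :: "(real \<Rightarrow> real) \<Rightarrow> real \<Rightarrow> real \<Rightarrow> 'a::euclidean_space \<Rightarrow> 'a \<Rightarrow> 'a \<Rightarrow> real" where
  "neuron_in \<phi> s1 s2 a b x = \<phi> (inner (w_in s1 a b) x - (inner (w_in s1 a b) a + s2))"

definition dot_n :: "nat \<Rightarrow> (nat \<Rightarrow> real) \<Rightarrow> (nat \<Rightarrow> real) \<Rightarrow> real" where
  "dot_n n u v = (\<Sum>j<n. u j * v j)"

definition w_h :: "real \<Rightarrow> nat \<Rightarrow> (nat \<Rightarrow> real) \<Rightarrow> (nat \<Rightarrow> real) \<Rightarrow> nat \<Rightarrow> real" where
  "w_h s1 n u v = (\<lambda>j. s1 * (v j - u j) / (\<Sum>i<n. (v i - u i)\<^sup>2))"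

definition neuron_h :: "(real \<Rightarrow> real) \<Rightarrow> real \<Rightarrow> real \<Rightarrow> nat \<Rightarrow> (nat \<Rightarrow> real) \<Rightarrow> (nat \<Rightarrow> real) \<Rightarrow> (nat \<Rightarrow> real) \<Rightarrow> real" where
  "neuron_h \<phi> s1 s2 n u v y = \<phi> (dot_n n (w_h s1 n u v) y - (dot_n n (w_h s1 n u v) u + s2))"

text \<open>Phi phi s1 s2 N xs k x = Phi^(k)(x) for k >= 1, where the i-th pair (0-based, global
  neuron index) is (xs (2 i), xs (2 i + 1)). The k = 0 clause is a dummy (Phi^(0) = id is
  handled separately, since it lives on the input type).\<close>
fun Phi :: "(real \<Rightarrow> real) \<Rightarrow> real \<Rightarrow> real \<Rightarrow> (nat \<Rightarrow> nat) \<Rightarrow> (nat \<Rightarrow> 'a::euclidean_space)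
             \<Rightarrow> nat \<Rightarrow> 'a \<Rightarrow> nat \<Rightarrow> real" where
  "Phi \<phi> s1 s2 N xs 0 x = (\<lambda>_. 0)"
| "Phi \<phi> s1 s2 N xs (Suc 0) x =
     (\<lambda>i. if i < N 1 then neuron_in \<phi> s1 s2 (xs (2 * i)) (xs (2 * i + 1)) x else 0)"
| "Phi \<phi> s1 s2 N xs (Suc (Suc k)) x =
     (\<lambda>i. if i < N (Suc (Suc k)) then
            neuron_h \<phi> s1 s2 (N (Suc k))
              (Phi \<phi> s1 s2 N xs (Suc k) (xs (2 * (Nb N (Suc k) + i))))
              (Phi \<phi> s1 s2 N xs (Suc k) (xs (2 * (Nb N (Suc k) + i) + 1)))
              (Phi \<phi> s1 s2 N xs (Suc k) x)
          else 0)"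

text \<open>Unnormalised layer density q_l(a,b | X_{l-1}); epsilon_1 = 0, epsilon_l = eps for l >= 2.
  nX k is the norm on R^(N k) (the space of layer k), nX0 the norm on the input space.\<close>
definition qdens :: "('a::euclidean_space \<Rightarrow> 'b::euclidean_space) \<Rightarrow> ('b \<Rightarrow> real) \<Rightarrow> ('a \<Rightarrow> real)
   \<Rightarrow> (nat \<Rightarrow> (nat \<Rightarrow> real) \<Rightarrow> real) \<Rightarrow> real \<Rightarrow> (real \<Rightarrow> real) \<Rightarrow> real \<Rightarrow> real \<Rightarrow> (nat \<Rightarrow> nat)
   \<Rightarrow> (nat \<Rightarrow> 'a) \<Rightarrow> nat \<Rightarrow> 'a \<Rightarrow> 'a \<Rightarrow> real" where
  "qdens f nY nX0 nX eps \<phi> s1 s2 N xs l a b =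
     (if l = 1 then
        (if a \<noteq> b then nY (f b - f a) / max (nX0 (b - a)) 0 else 0)
      else
        (let u = Phi \<phi> s1 s2 N xs (l - 1) a; v = Phi \<phi> s1 s2 N xs (l - 1) b in
         if u \<noteq> v then nY (f b - f a) / max (nX (l - 1) (\<lambda>j. v j - u j)) eps else 0))"

definition Cconst :: "('a::euclidean_space \<Rightarrow> 'b::euclidean_space) \<Rightarrow> ('b \<Rightarrow> real) \<Rightarrow> ('a \<Rightarrow> real)
   \<Rightarrow> (nat \<Rightarrow> (nat \<Rightarrow> real) \<Rightarrow> real) \<Rightarrow> real \<Rightarrow> (real \<Rightarrow> real) \<Rightarrow> real \<Rightarrow> real \<Rightarrow> (nat \<Rightarrow> nat)
   \<Rightarrow> 'a set \<Rightarrow> (nat \<Rightarrow> 'a) \<Rightarrow> nat \<Rightarrow> ennreal" where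
  "Cconst f nY nX0 nX eps \<phi> s1 s2 N X xs l =
     (\<integral>\<^sup>+ z \<in> X \<times> X. ennreal (qdens f nY nX0 nX eps \<phi> s1 s2 N xs l (fst z) (snd z)) \<partial>lborel)"

definition pdens :: "('a::euclidean_space \<Rightarrow> 'b::euclidean_space) \<Rightarrow> ('b \<Rightarrow> real) \<Rightarrow> ('a \<Rightarrow> real)
   \<Rightarrow> (nat \<Rightarrow> (nat \<Rightarrow> real) \<Rightarrow> real) \<Rightarrow> real \<Rightarrow> (real \<Rightarrow> real) \<Rightarrow> real \<Rightarrow> real \<Rightarrow> (nat \<Rightarrow> nat)
   \<Rightarrow> 'a set \<Rightarrow> (nat \<Rightarrow> 'a) \<Rightarrow> nat \<Rightarrow> 'a \<Rightarrow> 'a \<Rightarrow> real" where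
  "pdens f nY nX0 nX eps \<phi> s1 s2 N X xs l a b =
     (if 0 < Cconst f nY nX0 nX eps \<phi> s1 s2 N X xs l
      then qdens f nY nX0 nX eps \<phi> s1 s2 N xs l a b / enn2real (Cconst f nY nX0 nX eps \<phi> s1 s2 N X xs l)
      else 1 / measure lborel (X \<times> X))"

definition joint_dens :: "('a::euclidean_space \<Rightarrow> 'b::euclidean_space) \<Rightarrow> ('b \<Rightarrow> real) \<Rightarrow> ('a \<Rightarrow> real)
   \<Rightarrow> (nat \<Rightarrow> (nat \<Rightarrow> real) \<Rightarrow> real) \<Rightarrow> real \<Rightarrow> (real \<Rightarrow> real) \<Rightarrow> real \<Rightarrow> real \<Rightarrow> nat \<Rightarrow> (nat \<Rightarrow> nat)
   \<Rightarrow> 'a set \<Rightarrow> (nat \<Rightarrow> 'a) \<Rightarrow> real" where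
  "joint_dens f nY nX0 nX eps \<phi> s1 s2 L N X xs =
     (\<Prod>l\<in>{1..L}. \<Prod>i<N l.
        pdens f nY nX0 nX eps \<phi> s1 s2 N X xs l
          (xs (2 * (Nb N (l - 1) + i))) (xs (2 * (Nb N (l - 1) + i) + 1)))"

end

theory Submission
  imports Defs
begin

lemma norm_on_basic:
  assumes "is_norm_on UNIV n"
  shows "n 0 = 0" "\<And>x. n x \<ge> 0" "\<And>x y. n (x + y) \<le> n x + n y"
    "\<And>x. n (- x) = n x" "\<And>x y. n (x - y) = n (y - x)"
    "\<And>c x. n (c *\<^sub>R x) = \<bar>c\<bar> * n x"
proof -
  show sc: "\<And>c x. n (c *\<^sub>R x) = \<bar>c\<bar> * n x" using assms unfolding is_norm_on_def by auto
  show "n 0 = 0" using sc[of 0 0] by simp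
  show "\<And>x. n x \<ge> 0" using assms unfolding is_norm_on_def by auto
  show "\<And>x y. n (x + y) \<le> n x + n y" using assms unfolding is_norm_on_def by auto
  show neg: "\<And>x. n (- x) = n x" using sc[of "-1"] by simp
  show "\<And>x y. n (x - y) = n (y - x)" using neg by (metis minus_diff_eq)
qed

lemma norm_on_sum:
  assumes "is_norm_on UNIV n" "finite A"
  shows "n (sum g A) \<le> (\<Sum>a\<in>A. n (g a))"
  using assms(2)
proof induction
  case empty then show ?case using norm_on_basic[OF assms(1)] by simp
next
  case (insert a A)
  then show ?case using norm_on_basic(3)[OF assms(1), of "g a" "sum g A"] by simp
qed

lemma norm_on_bound:
  fixes n :: "'a::euclidean_space \<Rightarrow> real"
  assumes "is_norm_on UNIV n"
  shows "\<exists>C\<ge>0. \<forall>x. n x \<le> C * norm x"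
proof (intro exI[of _ "\<Sum>b\<in>Basis. n b"] conjI allI)
  show "0 \<le> (\<Sum>b\<in>Basis. n b)" using norm_on_basic(2)[OF assms] by (simp add: sum_nonneg)
  fix x :: 'a
  have "n x = n (\<Sum>b\<in>Basis. (x \<bullet> b) *\<^sub>R b)" by (simp add: euclidean_representation)
  also have "\<dots> \<le> (\<Sum>b\<in>Basis. n ((x \<bullet> b) *\<^sub>R b))" by (rule norm_on_sum[OF assms]) simp
  also have "\<dots> = (\<Sum>b\<in>Basis. \<bar>x \<bullet> b\<bar> * n b)" using norm_on_basic(6)[OF assms] by simp
  also have "\<dots> \<le> (\<Sum>b\<in>Basis. norm x * n b)"
    by (intro sum_mono mult_right_mono Basis_le_norm norm_on_basic(2)[OF assms]) auto
  also have "\<dots> = (\<Sum>b\<in>Basis. n b) * norm x" by (simp add: sum_distrib_left mult.commute)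
  finally show "n x \<le> (\<Sum>b\<in>Basis. n b) * norm x" .
qed

lemma norm_on_lip:
  assumes "is_norm_on UNIV n"
  shows "\<bar>n x - n y\<bar> \<le> n (x - y)"
proof -
  have "n x \<le> n y + n (x - y)" using norm_on_basic(3)[OF assms, of y "x - y"] by simp
  moreover have "n y \<le> n x + n (y - x)" using norm_on_basic(3)[OF assms, of x "y - x"] by simp
  ultimately show ?thesis using norm_on_basic(5)[OF assms, of x y] by linarith
qed

lemma norm_on_cont:
  fixes n :: "'a::euclidean_space \<Rightarrow> real"
  assumes "is_norm_on UNIV n"
  shows "continuous_on UNIV n"
proof -
  obtain C where C: "C \<ge> 0" "\<And>x. n x \<le> C * norm x" using norm_on_bound[OF assms] by blast
  show ?thesis unfolding continuous_on_iff
  proof (intro ballI allI impI)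
    fix x :: 'a and e :: real assume e: "e > 0"
    show "\<exists>d>0. \<forall>x'\<in>UNIV. dist x' x < d \<longrightarrow> dist (n x') (n x) < e"
    proof (intro exI[of _ "e / (C + 1)"] conjI ballI impI)
      show "e / (C + 1) > 0" using e C by simp
      fix x' assume "dist x' x < e / (C + 1)"
      then have "norm (x' - x) * (C + 1) < e" using C by (simp add: dist_norm field_simps)
      moreover have "dist (n x') (n x) \<le> C * norm (x' - x)"
        using norm_on_lip[OF assms, of x' x] C(2)[of "x' - x"] by (simp add: dist_real_def)
      moreover have "C * norm (x' - x) \<le> norm (x' - x) * (C + 1)" by (simp add: algebra_simps)
      ultimately show "dist (n x') (n x) < e" by linarith
    qed
  qed
qed

definition delta :: "nat \<Rightarrow> nat \<Rightarrow> real" where "delta j = (\<lambda>i. if i = j then 1 else 0)"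

lemma fin_basic:
  assumes "is_norm_fin n nrm"
  shows "nrm (\<lambda>_. 0) = 0"
    "\<And>x. \<forall>j\<ge>n. x j = 0 \<Longrightarrow> nrm x \<ge> 0"
    "\<And>x y. \<forall>j\<ge>n. x j = 0 \<Longrightarrow> \<forall>j\<ge>n. y j = 0 \<Longrightarrow> nrm (\<lambda>j. x j + y j) \<le> nrm x + nrm y"
    "\<And>c x. \<forall>j\<ge>n. x j = 0 \<Longrightarrow> nrm (\<lambda>j. c * x j) = \<bar>c\<bar> * nrm x"
proof -
  show sc: "\<And>c x. \<forall>j\<ge>n. x j = 0 \<Longrightarrow> nrm (\<lambda>j. c * x j) = \<bar>c\<bar> * nrm x"
    using assms unfolding is_norm_fin_def Let_def by auto
  show "nrm (\<lambda>_. 0) = 0" using sc[of "\<lambda>_. 0" 0] by simp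
  show "\<And>x. \<forall>j\<ge>n. x j = 0 \<Longrightarrow> nrm x \<ge> 0" using assms unfolding is_norm_fin_def Let_def by auto
  show "\<And>x y. \<forall>j\<ge>n. x j = 0 \<Longrightarrow> \<forall>j\<ge>n. y j = 0 \<Longrightarrow> nrm (\<lambda>j. x j + y j) \<le> nrm x + nrm y"
    using assms unfolding is_norm_fin_def Let_def by auto
qed

lemma fin_bound:
  assumes "is_norm_fin n nrm" "\<forall>j\<ge>n. x j = 0"
  shows "nrm x \<le> (\<Sum>j<n. \<bar>x j\<bar> * nrm (delta j))"
proof -
  have "k \<le> n \<Longrightarrow> nrm (\<lambda>i. if i < k then x i else 0) \<le> (\<Sum>j<k. \<bar>x j\<bar> * nrm (delta j))" for k
  proof (induction k)
    case 0 then show ?case using fin_basic(1)[OF assms(1)] by simp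
  next
    case (Suc k)
    have eq: "(\<lambda>i. if i < Suc k then x i else 0) = (\<lambda>i. (if i < k then x i else 0) + x k * delta k i)"
      by (rule ext) (auto simp: delta_def less_Suc_eq)
    have "nrm (\<lambda>i. (if i < k then x i else 0) + x k * delta k i)
        \<le> nrm (\<lambda>i. if i < k then x i else 0) + nrm (\<lambda>i. x k * delta k i)"
      using Suc.prems by (intro fin_basic(3)[OF assms(1)]) (auto simp: delta_def)
    also have "nrm (\<lambda>i. x k * delta k i) = \<bar>x k\<bar> * nrm (delta k)"
      using Suc.prems by (intro fin_basic(4)[OF assms(1)]) (auto simp: delta_def)
    finally show ?case using Suc by (simp add: eq)
  qed
  moreover have "(\<lambda>i. if i < n then x i else 0) = x" using assms(2) by (intro ext) (auto simp: not_less)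
  ultimately show ?thesis by (metis order_refl)
qed

lemma fin_lip:
  assumes "is_norm_fin n nrm" "\<forall>j\<ge>n. x j = 0" "\<forall>j\<ge>n. y j = 0"
  shows "\<bar>nrm x - nrm y\<bar> \<le> (\<Sum>j<n. \<bar>x j - y j\<bar> * nrm (delta j))"
proof -
  have a: "nrm x \<le> nrm y + nrm (\<lambda>j. x j - y j)"
    using fin_basic(3)[OF assms(1), of y "\<lambda>j. x j - y j"] assms by simp
  have b: "nrm y \<le> nrm x + nrm (\<lambda>j. x j - y j)"
    using fin_basic(3)[OF assms(1), of x "\<lambda>j. (-1) * (x j - y j)"]
      fin_basic(4)[OF assms(1), of "\<lambda>j. x j - y j" "-1"] assms by simp
  have "nrm (\<lambda>j. x j - y j) \<le> (\<Sum>j<n. \<bar>x j - y j\<bar> * nrm (delta j))"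
    using fin_bound[OF assms(1)] assms by simp
  with a b show ?thesis by linarith
qed

lemma floor_approx:
  fixes t y :: real assumes "t > 0"
  shows "\<bar>of_int \<lfloor>t * y\<rfloor> / t - y\<bar> \<le> 1 / t"
proof -
  have "of_int \<lfloor>t * y\<rfloor> \<le> t * y" "t * y < of_int \<lfloor>t * y\<rfloor> + 1" by linarith+
  then have "\<bar>of_int \<lfloor>t * y\<rfloor> - t * y\<bar> \<le> 1" by linarith
  then have "\<bar>(of_int \<lfloor>t * y\<rfloor> - t * y) / t\<bar> \<le> 1 / t" using assms
    by (simp add: abs_div_pos divide_right_mono)
  moreover have "(of_int \<lfloor>t * y\<rfloor> - t * y) / t = of_int \<lfloor>t * y\<rfloor> / t - y"
    using assms by (simp add: field_simps)
  ultimately show ?thesis by simp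
qed

lemma fin_norm_meas:
  assumes nf: "is_norm_fin n nrm"
    and W: "\<And>j. (\<lambda>\<omega>. W \<omega> j) \<in> borel_measurable M"
    and Wz: "\<And>\<omega> j. n \<le> j \<Longrightarrow> W \<omega> j = 0"
  shows "(\<lambda>\<omega>. nrm (W \<omega>)) \<in> borel_measurable M"
proof -
  define Wm where "Wm m \<omega> = (\<lambda>j. if j < n then of_int \<lfloor>real (Suc m) * W \<omega> j\<rfloor> / real (Suc m) else 0)"
    for m \<omega>
  define S where "S = (\<Sum>j<n. nrm (delta j))"
  show ?thesis
  proof (rule borel_measurable_LIMSEQ_real)
    fix \<omega>
    have bd: "\<bar>nrm (Wm m \<omega>) - nrm (W \<omega>)\<bar> \<le> S * (1 / real (Suc m))" for m
    proof -
      have "\<bar>nrm (Wm m \<omega>) - nrm (W \<omega>)\<bar> \<le> (\<Sum>j<n. \<bar>Wm m \<omega> j - W \<omega> j\<bar> * nrm (delta j))"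
        using Wz by (intro fin_lip[OF nf]) (auto simp: Wm_def)
      also have "\<dots> \<le> (\<Sum>j<n. (1 / real (Suc m)) * nrm (delta j))"
      proof (intro sum_mono mult_right_mono)
        fix j assume "j \<in> {..<n}"
        then show "\<bar>Wm m \<omega> j - W \<omega> j\<bar> \<le> 1 / real (Suc m)"
          using floor_approx[of "real (Suc m)" "W \<omega> j"] by (simp add: Wm_def)
        show "0 \<le> nrm (delta j)" using fin_basic(2)[OF nf, of "delta j"] \<open>j \<in> _\<close>
          by (auto simp: delta_def)
      qed
      also have "\<dots> = S * (1 / real (Suc m))" by (simp add: S_def sum_distrib_left sum_distrib_right mult.commute)
      finally show ?thesis .
    qed
    have "(\<lambda>m. S * (1 / real (Suc m))) \<longlonglongrightarrow> S * 0"
      by (intro tendsto_mult tendsto_const) (rule LIMSEQ_Suc[OF lim_inverse_n'[unfolded inverse_eq_divide]])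
    then have "(\<lambda>m. S * (1 / real (Suc m))) \<longlonglongrightarrow> 0" by simp
    then have "(\<lambda>m. nrm (Wm m \<omega>) - nrm (W \<omega>)) \<longlonglongrightarrow> 0"
      by (rule Lim_null_comparison[rotated]) (use bd in \<open>auto intro!: always_eventually\<close>)
    then show "(\<lambda>m. nrm (Wm m \<omega>)) \<longlonglongrightarrow> nrm (W \<omega>)"
      by (simp add: LIM_zero_iff)
  next
    fix m
    define lst where "lst \<omega> = map (\<lambda>j. \<lfloor>real (Suc m) * W \<omega> j\<rfloor>) [0..<n]" for \<omega>
    define G where "G l \<omega> = nrm (\<lambda>j. if j < n then of_int (l ! j) / real (Suc m) else 0)" for l :: "int list" and \<omega> :: 'a
    have eq: "nrm (Wm m \<omega>) = G (lst \<omega>) \<omega>" for \<omega>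
      unfolding G_def lst_def Wm_def by (intro arg_cong[where f=nrm] ext) (simp del: upt_Suc)
    have "lst \<in> measurable M (count_space UNIV)"
    proof (subst measurable_count_space_eq2_countable, safe)
      fix l :: "int list"
      have "lst -` {l} \<inter> space M = {\<omega> \<in> space M. length l = n \<and> (\<forall>j<n. \<lfloor>real (Suc m) * W \<omega> j\<rfloor> = l ! j)}"
      proof -
        have "lst \<omega> = l \<longleftrightarrow> (length l = n \<and> (\<forall>j<n. \<lfloor>real (Suc m) * W \<omega> j\<rfloor> = l ! j))" for \<omega>
          unfolding lst_def list_eq_iff_nth_eq by (simp del: upt_Suc) (metis)
        then show ?thesis by blast
      qed
      also have "\<dots> \<in> sets M"
      proof -
        have fl: "(\<lambda>\<omega>. \<lfloor>real (Suc m) * W \<omega> j\<rfloor>) \<in> measurable M (count_space UNIV)" for j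
          by (rule measurable_compose[OF _ measurable_real_floor]) (use W in simp)
        have "{\<omega> \<in> space M. \<lfloor>real (Suc m) * W \<omega> j\<rfloor> = l ! j} \<in> sets M" for j
          using measurable_sets[OF fl[of j], of "{l ! j}"] by (simp add: vimage_def Int_def conj_commute)
        then show ?thesis
          by (intro sets.sets_Collect_conj sets.sets_Collect_const sets.sets_Collect_finite_All) auto
      qed
      finally show "lst -` {l} \<inter> space M \<in> sets M" .
    qed simp
    then have "(\<lambda>\<omega>. G (lst \<omega>) \<omega>) \<in> borel_measurable M"
      by (rule measurable_compose_countable[rotated]) (simp add: G_def)
    then show "(\<lambda>\<omega>. nrm (Wm m \<omega>)) \<in> borel_measurable M" by (simp add: eq)
  qed
qed

lemma prod_integral:
  fixes F :: "nat \<Rightarrow> (nat \<Rightarrow> 'a::euclidean_space) \<Rightarrow> 'a \<Rightarrow> 'a \<Rightarrow> real" and X :: "'a set"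
  assumes dep: "\<And>j xs ys. j < K0 \<Longrightarrow> (\<And>i. i < 2*j \<Longrightarrow> xs i = ys i) \<Longrightarrow> F j xs = F j ys"
    and nonneg: "\<And>j xs a b. j < K0 \<Longrightarrow> F j xs a b \<ge> 0"
    and meas: "\<And>j K. j < K \<Longrightarrow> K \<le> K0 \<Longrightarrow>
       (\<lambda>xs. F j xs (xs (2*j)) (xs (2*j+1))) \<in> borel_measurable (PiM {..<2*K} (\<lambda>_. lborel))"
    and meas2: "\<And>j xs. j < K0 \<Longrightarrow> (\<lambda>z. F j xs (fst z) (snd z)) \<in> borel_measurable lborel"
    and int1: "\<And>j xs. j < K0 \<Longrightarrow> (\<integral>\<^sup>+ z \<in> X \<times> X. ennreal (F j xs (fst z) (snd z)) \<partial>lborel) = 1"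
    and Xs: "X \<in> sets lborel"
  shows "K \<le> K0 \<Longrightarrow> (\<integral>\<^sup>+ xs. ennreal (indicator (PiE {..<2*K} (\<lambda>_. X)) xs * (\<Prod>j<K. F j xs (xs (2*j)) (xs (2*j+1))))
           \<partial>PiM {..<2*K} (\<lambda>_. lborel)) = 1"
proof (induction K)
  case 0
  then show ?case by (simp add: PiM_empty nn_integral_count_space_finite)
next
  case (Suc K)
  interpret product_sigma_finite "\<lambda>_. lborel :: 'a measure" by standard
  define I0 where "I0 = {..<2*K}"
  define I1 where "I1 = insert (2*K) I0"
  have I2: "{..<2 * Suc K} = insert (2*K+1) I1" by (auto simp: I0_def I1_def)
  define P where "P xs = (\<Prod>j<K. F j xs (xs (2*j)) (xs (2*j+1)))" for xs
  define h where "h xs = ennreal (indicator (PiE {..<2 * Suc K} (\<lambda>_. X)) xs * (\<Prod>j<Suc K. F j xs (xs (2*j)) (xs (2*j+1))))" for xs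
  have hm: "h \<in> borel_measurable (PiM (insert (2*K+1) I1) (\<lambda>_. lborel))"
  proof -
    have "PiE {..<2 * Suc K} (\<lambda>_. X) \<in> sets (PiM {..<2 * Suc K} (\<lambda>_. lborel))"
      using Xs by (intro sets_PiM_I_finite) auto
    moreover have "(\<lambda>xs. F j xs (xs (2*j)) (xs (2*j+1))) \<in> borel_measurable (PiM {..<2 * Suc K} (\<lambda>_. lborel))"
      if "j < Suc K" for j using meas[of j "Suc K"] that Suc.prems by simp
    ultimately have "h \<in> borel_measurable (PiM {..<2 * Suc K} (\<lambda>_. lborel))"
      unfolding h_def by (intro measurable_compose[OF _ measurable_ennreal] borel_measurable_times
          borel_measurable_indicator borel_measurable_prod) auto
    then show ?thesis by (simp only: I2)
  qed
  have "(\<integral>\<^sup>+ xs. h xs \<partial>PiM {..<2 * Suc K} (\<lambda>_. lborel))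
      = (\<integral>\<^sup>+ x. (\<integral>\<^sup>+ y1. h (x(2*K+1 := y1)) \<partial>lborel) \<partial>PiM I1 (\<lambda>_. lborel))"
    unfolding I2 by (rule product_nn_integral_insert) (use hm in \<open>auto simp: I1_def I0_def\<close>)
  also have "\<dots> = (\<integral>\<^sup>+ x. (\<integral>\<^sup>+ y0. (\<integral>\<^sup>+ y1. h (x(2*K := y0, 2*K+1 := y1)) \<partial>lborel) \<partial>lborel) \<partial>PiM I0 (\<lambda>_. lborel))"
    unfolding I1_def
  proof (rule product_nn_integral_insert)
    show "finite I0" "2 * K \<notin> I0" by (auto simp: I0_def)
    have "(\<lambda>p. h ((\<lambda>(f, y). f(2*K+1 := y)) p)) \<in> borel_measurable (PiM (insert (2*K) I0) (\<lambda>_. lborel) \<Otimes>\<^sub>M lborel)"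
      by (rule measurable_compose[OF measurable_add_dim hm[unfolded I1_def]])
    then have "(\<lambda>(x, y1). h (x(2*K+1 := y1))) \<in> borel_measurable (PiM (insert (2*K) I0) (\<lambda>_. lborel) \<Otimes>\<^sub>M lborel)"
      by (simp add: case_prod_unfold)
    then show "(\<lambda>x. \<integral>\<^sup>+ y1. h (x(2 * K + 1 := y1)) \<partial>lborel) \<in> borel_measurable (PiM (insert (2*K) I0) (\<lambda>_. lborel))"
      by (intro lborel.borel_measurable_nn_integral) simp
  qed
  also have "\<dots> = (\<integral>\<^sup>+ x. ennreal (indicator (PiE I0 (\<lambda>_. X)) x * P x) \<partial>PiM I0 (\<lambda>_. lborel))"
  proof (rule nn_integral_cong)
    fix x assume x: "x \<in> space (PiM I0 (\<lambda>_. lborel :: 'a measure))"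
    define c where "c = indicator (PiE I0 (\<lambda>_. X)) x * P x"
    define e where "e z = indicator (X \<times> X) z * F K x (fst z) (snd z)" for z
    have c0: "c \<ge> 0" using nonneg Suc.prems unfolding c_def P_def
      by (intro mult_nonneg_nonneg prod_nonneg) auto
    have e0: "e z \<ge> 0" for z using nonneg Suc.prems by (auto simp: e_def)
    have hx: "h (x(2*K := y0, 2*K+1 := y1)) = ennreal c * ennreal (e (y0, y1))" for y0 y1
    proof -
      define x' where "x' = x(2*K := y0, 2*K+1 := y1)"
      have xe: "x \<in> PiE I0 (\<lambda>_. UNIV)" using x by (simp add: space_PiM)
      have agree: "x' i = x i" if "i < 2*K" for i using that by (simp add: x'_def)
      have ind: "(indicator (PiE {..<2 * Suc K} (\<lambda>_. X)) x' :: real) = indicator (PiE I0 (\<lambda>_. X)) x * indicator (X \<times> X) (y0, y1)"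
      proof -
        have "x' \<in> PiE {..<2 * Suc K} (\<lambda>_. X) \<longleftrightarrow> x \<in> PiE I0 (\<lambda>_. X) \<and> y0 \<in> X \<and> y1 \<in> X"
        proof
          assume a: "x' \<in> PiE {..<2 * Suc K} (\<lambda>_. X)"
          have "x \<in> PiE I0 (\<lambda>_. X)"
          proof (rule PiE_I)
            fix i assume "i \<in> I0"
            then have i: "i < 2*K" by (simp add: I0_def)
            then have "x' i \<in> X" using PiE_mem[OF a, of i] by simp
            then show "x i \<in> X" using agree[OF i] by simp
          next
            fix i assume "i \<notin> I0" then show "x i = undefined" using xe by (auto simp: PiE_def extensional_def)
          qed
          moreover have "y0 \<in> X" using PiE_mem[OF a, of "2*K"] by (simp add: x'_def)
          moreover have "y1 \<in> X" using PiE_mem[OF a, of "2*K+1"] by (simp add: x'_def)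
          ultimately show "x \<in> PiE I0 (\<lambda>_. X) \<and> y0 \<in> X \<and> y1 \<in> X" by blast
        next
          assume a: "x \<in> PiE I0 (\<lambda>_. X) \<and> y0 \<in> X \<and> y1 \<in> X"
          show "x' \<in> PiE {..<2 * Suc K} (\<lambda>_. X)"
          proof (rule PiE_I)
            fix i assume "i \<in> {..<2 * Suc K}"
            then show "x' i \<in> X" using a by (auto simp: x'_def I0_def PiE_def Pi_def)
          next
            fix i assume "i \<notin> {..<2 * Suc K}"
            then show "x' i = undefined" using a by (auto simp: x'_def I0_def PiE_def extensional_def)
          qed
        qed
        then show ?thesis by (auto simp: indicator_def)
      qed
      have Fj: "F j x' (x' (2*j)) (x' (2*j+1)) = F j x (x (2*j)) (x (2*j+1))" if "j < K" for j
      proof -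
        have "F j x' = F j x" using that Suc.prems agree by (intro dep) auto
        moreover have "x' (2*j) = x (2*j)" "x' (2*j+1) = x (2*j+1)" using that agree by auto
        ultimately show ?thesis by simp
      qed
      have FK: "F K x' (x' (2*K)) (x' (2*K+1)) = F K x y0 y1"
      proof -
        have "F K x' = F K x" using Suc.prems agree by (intro dep) auto
        then show ?thesis by (simp add: x'_def)
      qed
      have "(\<Prod>j<Suc K. F j x' (x' (2*j)) (x' (2*j+1))) = P x * F K x y0 y1"
        using Fj FK by (simp add: P_def)
      then have "h x' = ennreal (c * e (y0, y1))"
        unfolding h_def c_def e_def ind by (simp add: ac_simps)
      then show ?thesis using c0 e0 by (simp add: x'_def ennreal_mult)
    qed
    have XX: "X \<times> X \<in> sets (lborel :: ('a \<times> 'a) measure)"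
      by (subst lborel_prod[symmetric]) (intro pair_measureI; use Xs in simp)
    have em: "(\<lambda>z. ennreal (e z)) \<in> borel_measurable lborel"
      unfolding e_def using meas2[of K x] Suc.prems XX
      by (intro measurable_compose[OF _ measurable_ennreal] borel_measurable_times borel_measurable_indicator) auto
    have "(\<integral>\<^sup>+ y0. (\<integral>\<^sup>+ y1. h (x(2*K := y0, 2*K+1 := y1)) \<partial>lborel) \<partial>lborel)
        = (\<integral>\<^sup>+ y0. (\<integral>\<^sup>+ y1. ennreal c * ennreal (e (y0, y1)) \<partial>lborel) \<partial>lborel)"
      by (simp only: hx)
    also have "\<dots> = (\<integral>\<^sup>+ z. ennreal c * ennreal (e z) \<partial>(lborel \<Otimes>\<^sub>M lborel))"
      by (rule lborel.nn_integral_fst) (use em in \<open>simp add: lborel_prod\<close>)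
    also have "\<dots> = ennreal c * (\<integral>\<^sup>+ z. ennreal (e z) \<partial>lborel)"
      unfolding lborel_prod by (rule nn_integral_cmult[OF em])
    also have "(\<integral>\<^sup>+ z. ennreal (e z) \<partial>lborel) = 1"
      using int1[of K x] Suc.prems unfolding e_def
      by (subst ennreal_mult') (auto simp: mult.commute ennreal_indicator)
    finally show "(\<integral>\<^sup>+ y0. (\<integral>\<^sup>+ y1. h (x(2*K := y0, 2*K+1 := y1)) \<partial>lborel) \<partial>lborel)
        = ennreal (indicator (PiE I0 (\<lambda>_. X)) x * P x)" by (simp only: c_def mult_1_right)
  qed
  also have "\<dots> = 1" using Suc by (simp add: I0_def P_def)
  finally show ?case by (simp add: h_def)
qed

lemma Nb_0[simp]: "Nb N 0 = 0" by (simp add: Nb_def)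
lemma Nb_Suc: "Nb N (Suc k) = Nb N k + N (Suc k)" by (simp add: Nb_def)
lemma Nb_mono: "k \<le> k' \<Longrightarrow> Nb N k \<le> Nb N k'"
  by (induction k') (auto simp: Nb_Suc le_Suc_eq)

lemma Phi_dep:
  "\<forall>xs ys x. (\<forall>i < 2 * Nb N k. xs i = ys i) \<longrightarrow> Phi \<phi> s1 s2 N xs k x = Phi \<phi> s1 s2 N ys k x"
proof (induction k rule: nat_less_induct)
  case (1 k)
  show ?case
  proof (cases k)
    case 0 then show ?thesis by simp
  next
    case (Suc k1)
    show ?thesis
    proof (cases k1)
      case 0
      show ?thesis
      proof (intro allI impI)
        fix xs ys :: "nat \<Rightarrow> 'a" and x assume a: "\<forall>i<2 * Nb N k. xs i = ys i"
        have "Nb N k = N 1" using Suc 0 by (simp add: Nb_def)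
        then show "Phi \<phi> s1 s2 N xs k x = Phi \<phi> s1 s2 N ys k x"
          using a Suc 0 by (intro ext) auto
      qed
    next
      case (Suc k2)
      show ?thesis
      proof (intro allI impI)
        fix xs ys :: "nat \<Rightarrow> 'a" and x assume a: "\<forall>i<2 * Nb N k. xs i = ys i"
        have kk: "k = Suc (Suc k2)" using \<open>k = Suc k1\<close> Suc by simp
        have a': "\<forall>i<2 * Nb N (Suc k2). xs i = ys i"
          using a Nb_mono[of "Suc k2" k N] kk by auto
        have IH: "Phi \<phi> s1 s2 N xs (Suc k2) z = Phi \<phi> s1 s2 N ys (Suc k2) z" for z
          using 1[rule_format, of "Suc k2" xs ys z] a' kk by simp
        have NS: "Nb N k = Nb N (Suc k2) + N (Suc (Suc k2))" using kk by (simp add: Nb_Suc)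
        show "Phi \<phi> s1 s2 N xs k x = Phi \<phi> s1 s2 N ys k x"
          unfolding kk Phi.simps
        proof (rule ext)
          fix i
          show "(if i < N (Suc (Suc k2)) then neuron_h \<phi> s1 s2 (N (Suc k2))
              (Phi \<phi> s1 s2 N xs (Suc k2) (xs (2 * (Nb N (Suc k2) + i))))
              (Phi \<phi> s1 s2 N xs (Suc k2) (xs (2 * (Nb N (Suc k2) + i) + 1)))
              (Phi \<phi> s1 s2 N xs (Suc k2) x) else 0) =
            (if i < N (Suc (Suc k2)) then neuron_h \<phi> s1 s2 (N (Suc k2))
              (Phi \<phi> s1 s2 N ys (Suc k2) (ys (2 * (Nb N (Suc k2) + i))))
              (Phi \<phi> s1 s2 N ys (Suc k2) (ys (2 * (Nb N (Suc k2) + i) + 1)))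
              (Phi \<phi> s1 s2 N ys (Suc k2) x) else 0)"
          proof (cases "i < N (Suc (Suc k2))")
            case True
            then have "xs (2 * (Nb N (Suc k2) + i)) = ys (2 * (Nb N (Suc k2) + i))"
                "xs (2 * (Nb N (Suc k2) + i) + 1) = ys (2 * (Nb N (Suc k2) + i) + 1)"
              using a NS by auto
            then show ?thesis using IH by simp
          qed simp
        qed
      qed
    qed
  qed
qed

lemma Phi_zero: assumes "1 \<le> k" "N k \<le> j" shows "Phi \<phi> s1 s2 N xs k x j = 0"
proof (cases k)
  case (Suc k1) then show ?thesis using assms by (cases k1) auto
qed (use assms in auto)

lemma Phi_meas:
  fixes XS :: "'m \<Rightarrow> nat \<Rightarrow> 'a::euclidean_space"
  assumes phic: "continuous_on UNIV \<phi>"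
    and XS: "\<And>i. (\<lambda>\<omega>. XS \<omega> i) \<in> borel_measurable M"
  shows "\<forall>A j. A \<in> borel_measurable M \<longrightarrow> (\<lambda>\<omega>. Phi \<phi> s1 s2 N (XS \<omega>) k (A \<omega>) j) \<in> borel_measurable M"
proof (induction k rule: nat_less_induct)
  case (1 k)
  have phm[measurable]: "\<phi> \<in> borel_measurable borel" by (rule borel_measurable_continuous_onI[OF phic])
  note XS[measurable]
  show ?case
  proof (cases k)
    case 0 then show ?thesis by simp
  next
    case (Suc k1)
    show ?thesis
    proof (cases k1)
      case 0
      show ?thesis
      proof (intro allI impI)
        fix A :: "'m \<Rightarrow> 'a" and j assume [measurable]: "A \<in> borel_measurable M"
        show "(\<lambda>\<omega>. Phi \<phi> s1 s2 N (XS \<omega>) k (A \<omega>) j) \<in> borel_measurable M"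
          unfolding \<open>k = Suc k1\<close> \<open>k1 = 0\<close> Phi.simps neuron_in_def w_in_def by measurable
      qed
    next
      case (Suc k2)
      show ?thesis
      proof (intro allI impI)
        fix A :: "'m \<Rightarrow> 'a" and j assume [measurable]: "A \<in> borel_measurable M"
        have kk: "k = Suc (Suc k2)" using \<open>k = Suc k1\<close> Suc by simp
        have IH: "\<And>B j. B \<in> borel_measurable M \<Longrightarrow> (\<lambda>\<omega>. Phi \<phi> s1 s2 N (XS \<omega>) (Suc k2) (B \<omega>) j) \<in> borel_measurable M"
          using 1 kk by auto
        have [measurable]: "(\<lambda>\<omega>. Phi \<phi> s1 s2 N (XS \<omega>) (Suc k2) (A \<omega>) j') \<in> borel_measurable M" for j'
          by (rule IH) simp
        have [measurable]: "(\<lambda>\<omega>. Phi \<phi> s1 s2 N (XS \<omega>) (Suc k2) (XS \<omega> (2 * (Nb N (Suc k2) + j))) j') \<in> borel_measurable M" for j'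
          by (rule IH) simp
        have [measurable]: "(\<lambda>\<omega>. Phi \<phi> s1 s2 N (XS \<omega>) (Suc k2) (XS \<omega> (2 * (Nb N (Suc k2) + j) + 1)) j') \<in> borel_measurable M" for j'
          by (rule IH) simp
        show "(\<lambda>\<omega>. Phi \<phi> s1 s2 N (XS \<omega>) k (A \<omega>) j) \<in> borel_measurable M"
          unfolding kk Phi.simps neuron_h_def dot_n_def w_h_def by measurable
      qed
    qed
  qed
qed

locale setting =
  fixes X :: "'a::euclidean_space set" and f :: "'a \<Rightarrow> 'b::euclidean_space"
    and nY :: "'b \<Rightarrow> real" and nX0 :: "'a \<Rightarrow> real" and nX :: "nat \<Rightarrow> (nat \<Rightarrow> real) \<Rightarrow> real"
    and eps s1 s2 :: real and \<phi> :: "real \<Rightarrow> real" and L :: nat and N :: "nat \<Rightarrow> nat"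
  assumes compX: "compact X" and posX: "emeasure lborel X > 0"
    and nY: "is_norm_on UNIV nY" and nX0: "is_norm_on UNIV nX0"
    and nX: "\<And>k. 1 \<le> k \<Longrightarrow> k < L \<Longrightarrow> is_norm_fin (N k) (nX k)"
    and lip: "\<exists>K. \<forall>x y. nY (f x - f y) \<le> K * nX0 (x - y)"
    and phic: "continuous_on UNIV \<phi>" and eps: "eps > 0"
begin

abbreviation "q \<equiv> qdens f nY nX0 nX eps \<phi> s1 s2 N"
abbreviation "C \<equiv> Cconst f nY nX0 nX eps \<phi> s1 s2 N X"
abbreviation "pd \<equiv> pdens f nY nX0 nX eps \<phi> s1 s2 N X"

lemma lipK: "\<exists>K\<ge>0. \<forall>x y. nY (f x - f y) \<le> K * nX0 (x - y)"
proof -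
  obtain K where K: "\<forall>x y. nY (f x - f y) \<le> K * nX0 (x - y)" using lip by blast
  have "nY (f x - f y) \<le> \<bar>K\<bar> * nX0 (x - y)" for x y
    using K[rule_format, of x y] norm_on_basic(2)[OF nX0, of "x - y"]
    by (smt (verit) mult_right_mono abs_ge_self)
  then show ?thesis by (intro exI[of _ "\<bar>K\<bar>"]) auto
qed

lemma g_cont: "continuous_on UNIV (\<lambda>z. nY (f (snd z) - f (fst z)))"
proof -
  obtain K where K: "K \<ge> 0" "\<And>x y. nY (f x - f y) \<le> K * nX0 (x - y)" using lipK by blast
  obtain C0 where C0: "C0 \<ge> 0" "\<And>x. nX0 x \<le> C0 * norm x" using norm_on_bound[OF nX0] by blast
  have "(K * C0 * 2)-lipschitz_on UNIV (\<lambda>z. nY (f (snd z) - f (fst z)))"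
  proof (rule lipschitz_onI)
    show "0 \<le> K * C0 * 2" using K C0 by simp
    fix z z' :: "'a \<times> 'a"
    obtain a b where z: "z = (a, b)" by (cases z)
    obtain a' b' where z': "z' = (a', b')" by (cases z')
    have "\<bar>nY (f b - f a) - nY (f b' - f a')\<bar> \<le> nY ((f b - f a) - (f b' - f a'))"
      by (rule norm_on_lip[OF nY])
    also have "(f b - f a) - (f b' - f a') = (f b - f b') + (f a' - f a)" by (simp add: algebra_simps)
    also have "nY \<dots> \<le> nY (f b - f b') + nY (f a' - f a)" by (rule norm_on_basic(3)[OF nY])
    also have "\<dots> \<le> K * nX0 (b - b') + K * nX0 (a' - a)" using K by (intro add_mono) auto
    also have "\<dots> \<le> K * (C0 * norm (b - b')) + K * (C0 * norm (a' - a))"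
      using K C0 by (intro add_mono mult_left_mono) auto
    also have "\<dots> \<le> K * (C0 * dist z z') + K * (C0 * dist z z')"
    proof -
      have "norm (b - b') \<le> dist z z'" using dist_snd_le[of z z'] by (simp add: z z' dist_norm)
      moreover have "norm (a' - a) \<le> dist z z'" using dist_fst_le[of z z'] by (simp add: z z' dist_norm norm_minus_commute)
      ultimately show ?thesis using K C0 by (intro add_mono mult_left_mono) auto
    qed
    finally show "dist (nY (f (snd z) - f (fst z))) (nY (f (snd z') - f (fst z'))) \<le> K * C0 * 2 * dist z z'"
      by (simp add: z z' dist_real_def algebra_simps)
  qed
  then show ?thesis by (rule lipschitz_on_continuous_on)
qed

lemma q_nonneg: "q xs l a b \<ge> 0"
  unfolding qdens_def Let_def using norm_on_basic(2)[OF nY] eps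
  by (auto intro!: divide_nonneg_nonneg)

lemma q_bound: "\<exists>Bd. \<forall>xs l a b. a \<in> X \<longrightarrow> b \<in> X \<longrightarrow> q xs l a b \<le> Bd"
proof -
  obtain K where K: "K \<ge> 0" "\<And>x y. nY (f x - f y) \<le> K * nX0 (x - y)" using lipK by blast
  obtain C0 where C0: "C0 \<ge> 0" "\<And>x. nX0 x \<le> C0 * norm x" using norm_on_bound[OF nX0] by blast
  obtain R where R: "\<And>x. x \<in> X \<Longrightarrow> norm x \<le> R"
    using compact_imp_bounded[OF compX] by (auto simp: bounded_iff)
  show ?thesis
  proof (intro exI[of _ "max K (K * C0 * (2 * R) / eps)"] allI impI)
    fix xs l a b assume ab: "a \<in> X" "b \<in> X"
    have gb: "nY (f b - f a) \<le> K * C0 * (2 * R)"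
    proof -
      have "nY (f b - f a) \<le> K * nX0 (b - a)" by (rule K(2))
      also have "\<dots> \<le> K * (C0 * norm (b - a))" using K C0 by (intro mult_left_mono) auto
      also have "norm (b - a) \<le> 2 * R" using R[OF ab(1)] R[OF ab(2)] norm_triangle_ineq4[of b a] by linarith
      then have "K * (C0 * norm (b - a)) \<le> K * (C0 * (2 * R))" using K C0 by (intro mult_left_mono) auto
      finally show ?thesis by simp
    qed
    have g0: "nY (f b - f a) \<ge> 0" by (rule norm_on_basic(2)[OF nY])
    show "q xs l a b \<le> max K (K * C0 * (2 * R) / eps)"
    proof (cases "l = 1")
      case True
      show ?thesis
      proof (cases "a = b")
        case False
        then have pos: "nX0 (b - a) > 0" using nX0 unfolding is_norm_on_def
          by (metis eq_iff_diff_eq_0 iso_tuple_UNIV_I less_eq_real_def)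
        have "nY (f b - f a) / nX0 (b - a) \<le> K"
          using K(2)[of b a] pos by (simp add: divide_le_eq)
        then show ?thesis using True False pos by (simp add: qdens_def)
      qed (simp add: qdens_def True K max.coboundedI1)
    next
      case False
      have "q xs l a b \<le> nY (f b - f a) / eps"
        using False g0 eps by (auto simp: qdens_def Let_def intro!: divide_left_mono)
      also have "\<dots> \<le> K * C0 * (2 * R) / eps" using gb eps by (simp add: divide_right_mono)
      finally show ?thesis by simp
    qed
  qed
qed

end

context setting begin

lemma q_meas:
  fixes XS :: "'m \<Rightarrow> nat \<Rightarrow> 'a" and A B :: "'m \<Rightarrow> 'a"
  assumes XS: "\<And>i. (\<lambda>\<omega>. XS \<omega> i) \<in> borel_measurable M"
    and A: "A \<in> borel_measurable M" and B: "B \<in> borel_measurable M" and l: "l \<le> L"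
  shows "(\<lambda>\<omega>. q (XS \<omega>) l (A \<omega>) (B \<omega>)) \<in> borel_measurable M"
proof -
  have gm[measurable]: "(\<lambda>\<omega>. nY (f (B \<omega>) - f (A \<omega>))) \<in> borel_measurable M"
    using borel_measurable_continuous_Pair[OF A B, of "\<lambda>a b. nY (f b - f a)"] g_cont by simp
  have n0m[measurable]: "(\<lambda>\<omega>. nX0 (B \<omega> - A \<omega>)) \<in> borel_measurable M"
    by (rule measurable_compose[OF borel_measurable_diff[OF B A] borel_measurable_continuous_onI[OF norm_on_cont[OF nX0]]])
  consider "l = 0" | "l = 1" | "l \<ge> 2" by linarith
  then show ?thesis
  proof cases
    case 1 then show ?thesis by (simp add: qdens_def)
  next
    case 2
    have [measurable]: "(\<lambda>\<omega>. norm (B \<omega> - A \<omega>)) \<in> borel_measurable M" using A B by measurable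
    have "{\<omega> \<in> space M. A \<omega> \<noteq> B \<omega>} = {\<omega> \<in> space M. norm (B \<omega> - A \<omega>) \<noteq> 0}" by auto
    also have "\<dots> \<in> sets M" by measurable
    finally have S: "{\<omega> \<in> space M. A \<omega> \<noteq> B \<omega>} \<in> sets M" .
    have "(\<lambda>\<omega>. if A \<omega> \<noteq> B \<omega> then nY (f (B \<omega>) - f (A \<omega>)) / max (nX0 (B \<omega> - A \<omega>)) 0 else 0) \<in> borel_measurable M"
      by (rule measurable_If[OF borel_measurable_divide[OF gm borel_measurable_max[OF borel_measurable_const n0m]] borel_measurable_const S])
    then show ?thesis using 2 by (simp add: qdens_def)
  next
    case 3
    define k where "k = l - 1"
    have k: "1 \<le> k" "k < L" using 3 l by (auto simp: k_def)
    define t where "t \<omega> = nX k (\<lambda>j. Phi \<phi> s1 s2 N (XS \<omega>) k (B \<omega>) j - Phi \<phi> s1 s2 N (XS \<omega>) k (A \<omega>) j)" for \<omega>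
    have tm[measurable]: "t \<in> borel_measurable M"
      unfolding t_def
    proof (rule fin_norm_meas[OF nX[OF k]])
      fix j show "(\<lambda>\<omega>. Phi \<phi> s1 s2 N (XS \<omega>) k (B \<omega>) j - Phi \<phi> s1 s2 N (XS \<omega>) k (A \<omega>) j) \<in> borel_measurable M"
        using Phi_meas[OF phic XS] A B by (intro borel_measurable_diff) auto
    next
      fix \<omega> j assume j: "N k \<le> j" then show "Phi \<phi> s1 s2 N (XS \<omega>) k (B \<omega>) j - Phi \<phi> s1 s2 N (XS \<omega>) k (A \<omega>) j = 0"
        by (simp add: Phi_zero[of k N j, OF k(1) j])
    qed
    have eq: "q (XS \<omega>) l (A \<omega>) (B \<omega>) = (if t \<omega> \<noteq> 0 then nY (f (B \<omega>) - f (A \<omega>)) / max (t \<omega>) eps else 0)" for \<omega>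
    proof -
      let ?u = "Phi \<phi> s1 s2 N (XS \<omega>) k (A \<omega>)" and ?v = "Phi \<phi> s1 s2 N (XS \<omega>) k (B \<omega>)"
      have inV: "\<forall>j\<ge>N k. (\<lambda>j. ?v j - ?u j) j = 0"
      proof (intro allI impI)
        fix j assume j: "N k \<le> j"
        show "(\<lambda>j. ?v j - ?u j) j = 0" by (simp add: Phi_zero[of k N j, OF k(1) j])
      qed
      have "t \<omega> = 0 \<longleftrightarrow> (\<lambda>j. ?v j - ?u j) = (\<lambda>_. 0)"
        using nX[OF k] inV unfolding is_norm_fin_def Let_def t_def by blast
      also have "\<dots> \<longleftrightarrow> ?u = ?v" by (auto simp: fun_eq_iff)
      finally show ?thesis using 3 by (auto simp: qdens_def Let_def t_def k_def)
    qed
    have S: "{\<omega> \<in> space M. t \<omega> \<noteq> 0} \<in> sets M" by measurable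
    show ?thesis unfolding eq
      by (rule measurable_If[OF borel_measurable_divide[OF gm borel_measurable_max[OF borel_measurable_const tm]] borel_measurable_const S])
  qed
qed

lemma XX_sets: "X \<times> X \<in> sets (lborel :: ('a \<times> 'a) measure)"
proof -
  have "closed X" using compX by (rule compact_imp_closed)
  then have "closed (X \<times> X)" by (simp add: closed_Times)
  then show ?thesis unfolding sets_lborel by (rule borel_closed)
qed

lemma X_sets: "X \<in> sets lborel"
proof -
  have "closed X" using compX by (rule compact_imp_closed)
  then show ?thesis by simp
qed

lemma C_meas:
  fixes XS :: "'m \<Rightarrow> nat \<Rightarrow> 'a"
  assumes XS: "\<And>i. (\<lambda>\<omega>. XS \<omega> i) \<in> borel_measurable M" and l: "l \<le> L"
  shows "(\<lambda>\<omega>. C (XS \<omega>) l) \<in> borel_measurable M"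
proof -
  have fm: "(\<lambda>p. fst (snd p)) \<in> borel_measurable (M \<Otimes>\<^sub>M (lborel :: ('a \<times> 'a) measure))"
    by (rule measurable_compose[OF measurable_snd]) (simp add: borel_measurable_continuous_onI continuous_on_fst)
  have sm: "(\<lambda>p. snd (snd p)) \<in> borel_measurable (M \<Otimes>\<^sub>M (lborel :: ('a \<times> 'a) measure))"
    by (rule measurable_compose[OF measurable_snd]) (simp add: borel_measurable_continuous_onI continuous_on_snd)
  have XSm: "(\<lambda>p. XS (fst p) i) \<in> borel_measurable (M \<Otimes>\<^sub>M (lborel :: ('a \<times> 'a) measure))" for i
    by (rule measurable_compose[OF measurable_fst XS])
  have qm: "(\<lambda>p. q (XS (fst p)) l (fst (snd p)) (snd (snd p))) \<in> borel_measurable (M \<Otimes>\<^sub>M (lborel :: ('a \<times> 'a) measure))"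
    by (rule q_meas[OF XSm fm sm l])
  have im: "(\<lambda>p. indicator (X \<times> X) (snd p) :: ennreal) \<in> borel_measurable (M \<Otimes>\<^sub>M (lborel :: ('a \<times> 'a) measure))"
    by (rule measurable_compose[OF measurable_snd borel_measurable_indicator[OF XX_sets]])
  have "(\<lambda>p. ennreal (q (XS (fst p)) l (fst (snd p)) (snd (snd p))) * indicator (X \<times> X) (snd p)) \<in> borel_measurable (M \<Otimes>\<^sub>M (lborel :: ('a \<times> 'a) measure))"
    using qm im by measurable
  then show ?thesis unfolding Cconst_def
    by (intro lborel.borel_measurable_nn_integral) (simp add: case_prod_unfold)
qed

lemma pd_meas:
  fixes XS :: "'m \<Rightarrow> nat \<Rightarrow> 'a" and A B :: "'m \<Rightarrow> 'a"
  assumes XS: "\<And>i. (\<lambda>\<omega>. XS \<omega> i) \<in> borel_measurable M"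
    and A: "A \<in> borel_measurable M" and B: "B \<in> borel_measurable M" and l: "l \<le> L"
  shows "(\<lambda>\<omega>. pd (XS \<omega>) l (A \<omega>) (B \<omega>)) \<in> borel_measurable M"
proof -
  have [measurable]: "(\<lambda>\<omega>. q (XS \<omega>) l (A \<omega>) (B \<omega>)) \<in> borel_measurable M" by (rule q_meas[OF XS A B l])
  have [measurable]: "(\<lambda>\<omega>. C (XS \<omega>) l) \<in> borel_measurable M" by (rule C_meas[OF XS l])
  have S: "{\<omega> \<in> space M. 0 < C (XS \<omega>) l} \<in> sets M" by measurable
  show ?thesis unfolding pdens_def
    by (rule measurable_If[OF borel_measurable_divide[OF _ borel_measurable_enn2real] borel_measurable_const S]) measurable
qed

lemma pd_nonneg: "pd xs l a b \<ge> 0"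
  unfolding pdens_def using q_nonneg by (auto intro!: divide_nonneg_nonneg)

end

context setting begin

lemma XX_meas: "0 < emeasure lborel (X \<times> X)" "emeasure lborel (X \<times> X) < \<infinity>"
proof -
  have "emeasure lborel (X \<times> X) = emeasure (lborel \<Otimes>\<^sub>M lborel) (X \<times> X)" by (simp add: lborel_prod)
  also have "\<dots> = emeasure lborel X * emeasure lborel X"
    using X_sets by (intro lborel.emeasure_pair_measure_Times) auto
  finally have e: "emeasure lborel (X \<times> X) = emeasure lborel X * emeasure lborel X" .
  show "0 < emeasure lborel (X \<times> X)" unfolding e using posX by (simp add: ennreal_zero_less_mult_iff)
  show "emeasure lborel (X \<times> X) < \<infinity>"
    by (intro emeasure_bounded_finite compact_imp_bounded compact_Times compX)
qed

lemma pd_int1: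
  assumes l: "l \<le> L"
  shows "(\<integral>\<^sup>+ z \<in> X \<times> X. ennreal (pd xs l (fst z) (snd z)) \<partial>lborel) = 1"
proof -
  obtain Bd where Bd: "\<And>l a b. a \<in> X \<Longrightarrow> b \<in> X \<Longrightarrow> q xs l a b \<le> Bd" using q_bound by blast
  have qm: "(\<lambda>z. q xs l (fst z) (snd z)) \<in> borel_measurable (lborel :: ('a \<times> 'a) measure)"
    using q_meas[of "\<lambda>_. xs" lborel fst snd l] l
    by (simp add: borel_measurable_continuous_onI continuous_on_fst continuous_on_snd)
  have qim: "(\<lambda>z. ennreal (q xs l (fst z) (snd z)) * indicator (X \<times> X) z) \<in> borel_measurable (lborel :: ('a \<times> 'a) measure)"
    using qm XX_sets by measurable
  define Cv where "Cv = C xs l"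
  have Cfin: "Cv < \<infinity>"
  proof -
    have "Cv \<le> (\<integral>\<^sup>+ z. ennreal Bd * indicator (X \<times> X) z \<partial>lborel)"
      unfolding Cv_def Cconst_def
      by (intro nn_integral_mono) (auto simp: indicator_def intro!: ennreal_leI Bd)
    also have "\<dots> = ennreal Bd * emeasure lborel (X \<times> X)" using XX_sets by (simp add: nn_integral_cmult_indicator)
    also have "\<dots> < \<infinity>" using XX_meas(2) by (simp add: ennreal_mult_less_top)
    finally show ?thesis .
  qed
  show ?thesis
  proof (cases "0 < Cv")
    case True
    define c where "c = enn2real Cv"
    have Cc: "Cv = ennreal c" using Cfin by (simp add: c_def ennreal_enn2real_if)
    have c0: "c > 0" using True Cc by simp
    have "(\<integral>\<^sup>+ z \<in> X \<times> X. ennreal (pd xs l (fst z) (snd z)) \<partial>lborel)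
        = (\<integral>\<^sup>+ z. (ennreal (q xs l (fst z) (snd z)) * indicator (X \<times> X) z) * ennreal (1 / c) \<partial>lborel)"
    proof (rule nn_integral_cong)
      fix z :: "'a \<times> 'a"
      have "pd xs l (fst z) (snd z) = q xs l (fst z) (snd z) * (1 / c)"
        using True by (simp add: pdens_def Cv_def c_def)
      then show "ennreal (pd xs l (fst z) (snd z)) * indicator (X \<times> X) z
          = ennreal (q xs l (fst z) (snd z)) * indicator (X \<times> X) z * ennreal (1 / c)"
      proof -
        have "ennreal (q xs l (fst z) (snd z) * (1 / c)) = ennreal (q xs l (fst z) (snd z)) * ennreal (1 / c)"
          using q_nonneg c0 by (intro ennreal_mult) auto
        then show ?thesis using \<open>pd xs l (fst z) (snd z) = _\<close> by (simp only: mult_ac)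
      qed
    qed
    also have "\<dots> = Cv * ennreal (1 / c)"
      by (simp add: nn_integral_multc[OF qim] Cv_def Cconst_def)
    also have "\<dots> = 1" using c0 by (simp add: Cc ennreal_mult[symmetric])
    finally show ?thesis .
  next
    case False
    then have C0: "\<not> 0 < C xs l" by (simp add: Cv_def)
    define m where "m = measure lborel (X \<times> X)"
    have em: "emeasure lborel (X \<times> X) = ennreal m"
      using XX_meas(2) by (simp add: m_def emeasure_eq_ennreal_measure)
    have m0: "m > 0" using XX_meas(1) em by simp
    have "(\<integral>\<^sup>+ z \<in> X \<times> X. ennreal (pd xs l (fst z) (snd z)) \<partial>lborel)
        = (\<integral>\<^sup>+ z. ennreal (1 / m) * indicator (X \<times> X) z \<partial>lborel)"
      using C0 by (simp add: pdens_def m_def)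
    also have "\<dots> = ennreal (1 / m) * ennreal m" using XX_sets em by (simp add: nn_integral_cmult_indicator)
    also have "\<dots> = 1" using m0 by (simp add: ennreal_mult[symmetric])
    finally show ?thesis .
  qed
qed

lemma q_dep:
  assumes "\<And>i. i < 2 * Nb N (l - 1) \<Longrightarrow> xs i = ys i"
  shows "q xs l = q ys l"
proof -
  have "Phi \<phi> s1 s2 N xs (l - 1) x = Phi \<phi> s1 s2 N ys (l - 1) x" for x
    using Phi_dep[of N "l - 1" \<phi> s1 s2] assms by blast
  then show ?thesis by (intro ext) (simp add: qdens_def)
qed

lemma pd_dep:
  assumes "\<And>i. i < 2 * Nb N (l - 1) \<Longrightarrow> xs i = ys i"
  shows "pd xs l = pd ys l"
proof -
  have "q xs l = q ys l" by (rule q_dep[OF assms])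
  then have "C xs l = C ys l" by (simp add: Cconst_def)
  with \<open>q xs l = q ys l\<close> show ?thesis by (intro ext) (simp add: pdens_def)
qed

end

definition lay :: "(nat \<Rightarrow> nat) \<Rightarrow> nat \<Rightarrow> nat" where "lay N j = (LEAST l. j < Nb N l)"

lemma lay_props:
  assumes "j < Nb N L"
  shows "1 \<le> lay N j" "lay N j \<le> L" "Nb N (lay N j - 1) \<le> j"
proof -
  have lt: "j < Nb N (lay N j)" unfolding lay_def by (rule LeastI[of _ L]) (rule assms)
  show "lay N j \<le> L" unfolding lay_def by (rule Least_le) (rule assms)
  show "1 \<le> lay N j" using lt by (cases "lay N j") auto
  then have "lay N j - 1 < lay N j" by simp
  then have "\<not> j < Nb N (lay N j - 1)" unfolding lay_def by (rule not_less_Least)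
  then show "Nb N (lay N j - 1) \<le> j" by simp
qed

lemma lay_eq:
  assumes "i < N (Suc l)"
  shows "lay N (Nb N l + i) = Suc l"
  unfolding lay_def
proof (rule Least_equality)
  show "Nb N l + i < Nb N (Suc l)" using assms by (simp add: Nb_Suc)
  fix l' assume a: "Nb N l + i < Nb N l'"
  show "Suc l \<le> l'"
  proof (rule ccontr)
    assume "\<not> Suc l \<le> l'"
    then have "Nb N l' \<le> Nb N l" by (intro Nb_mono) simp
    with a show False by simp
  qed
qed

lemma prod_split: fixes a b :: nat shows "(\<Prod>j<a+b. h j) = (\<Prod>j<a. h j) * (\<Prod>i<b. h (a + i) :: real)"
  by (induction b) (simp_all add: mult_ac)

lemma reindex:
  "(\<Prod>l\<in>{1..L}. \<Prod>i<N l. G l (2 * (Nb N (l - 1) + i)) (2 * (Nb N (l - 1) + i) + 1))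
    = (\<Prod>j<Nb N L. G (lay N j) (2 * j) (2 * j + 1) :: real)"
proof (induction L)
  case 0 then show ?case by simp
next
  case (Suc L)
  have "(\<Prod>l\<in>{1..Suc L}. \<Prod>i<N l. G l (2 * (Nb N (l - 1) + i)) (2 * (Nb N (l - 1) + i) + 1))
      = (\<Prod>l\<in>{1..L}. \<Prod>i<N l. G l (2 * (Nb N (l - 1) + i)) (2 * (Nb N (l - 1) + i) + 1))
        * (\<Prod>i<N (Suc L). G (Suc L) (2 * (Nb N L + i)) (2 * (Nb N L + i) + 1))"
    by (simp add: prod.cl_ivl_Suc)
  also have "(\<Prod>i<N (Suc L). G (Suc L) (2 * (Nb N L + i)) (2 * (Nb N L + i) + 1))
      = (\<Prod>i<N (Suc L). G (lay N (Nb N L + i)) (2 * (Nb N L + i)) (2 * (Nb N L + i) + 1))"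
    by (intro prod.cong refl) (simp add: lay_eq)
  also have "(\<Prod>l\<in>{1..L}. \<Prod>i<N l. G l (2 * (Nb N (l - 1) + i)) (2 * (Nb N (l - 1) + i) + 1))
      = (\<Prod>j<Nb N L. G (lay N j) (2 * j) (2 * j + 1))" by (rule Suc.IH)
  also have "(\<Prod>j<Nb N L. G (lay N j) (2 * j) (2 * j + 1)) *
      (\<Prod>i<N (Suc L). G (lay N (Nb N L + i)) (2 * (Nb N L + i)) (2 * (Nb N L + i) + 1))
      = (\<Prod>j<Nb N (Suc L). G (lay N j) (2 * j) (2 * j + 1))"
    unfolding Nb_Suc by (rule prod_split[symmetric])
  finally show ?case .
qed

lemma comp_meas: "(\<lambda>\<omega>. \<omega> i) \<in> borel_measurable (PiM I (\<lambda>_. lborel :: 'a::euclidean_space measure))"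
proof (cases "i \<in> I")
  case True
  then show ?thesis using measurable_component_singleton[of i I "\<lambda>_. lborel :: 'a measure"] by simp
next
  case False
  have "(\<lambda>\<omega>. \<omega> i) \<in> borel_measurable (PiM I (\<lambda>_. lborel :: 'a measure)) \<longleftrightarrow>
        (\<lambda>\<omega>. undefined :: 'a) \<in> borel_measurable (PiM I (\<lambda>_. lborel :: 'a measure))"
    by (rule measurable_cong) (use False in \<open>auto simp: space_PiM PiE_def extensional_def\<close>)
  then show ?thesis by simp
qed

theorem proposition1:
  fixes X :: "'a::euclidean_space set"
    and f :: "'a \<Rightarrow> 'b::euclidean_space"
    and nY :: "'b \<Rightarrow> real" and nX0 :: "'a \<Rightarrow> real"
    and nX :: "nat \<Rightarrow> (nat \<Rightarrow> real) \<Rightarrow> real"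
    and eps s1 s2 :: real and \<phi> :: "real \<Rightarrow> real"
    and L :: nat and N :: "nat \<Rightarrow> nat"
  assumes "compact X" and "emeasure lborel X > 0"
    and "is_norm_on UNIV nY" and "is_norm_on UNIV nX0"
    and "\<And>k. 1 \<le> k \<Longrightarrow> k < L \<Longrightarrow> is_norm_fin (N k) (nX k)"
    and "\<exists>K. \<forall>x y. nY (f x - f y) \<le> K * nX0 (x - y)"
    and "continuous_on UNIV \<phi>"
    and "eps > 0"
  defines "M \<equiv> PiM {..<2 * Nb N L} (\<lambda>_. lborel :: 'a measure)"
    and "Xbar \<equiv> PiE {..<2 * Nb N L} (\<lambda>_. X)"
    and "p \<equiv> joint_dens f nY nX0 nX eps \<phi> s1 s2 L N X"
  shows "set_integrable M Xbar p \<and> (LINT xs:Xbar|M. p xs) = 1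
         \<and> prob_space (density M (\<lambda>xs. ennreal (indicator Xbar xs * p xs)))"
proof -
  interpret setting X f nY nX0 nX eps s1 s2 \<phi> L N
    by unfold_locales (use assms in auto)
  define F where "F j xs a b = pd xs (lay N j) a b" for j xs a b
  define K0 where "K0 = Nb N L"
  have p_eq: "p xs = (\<Prod>j<K0. F j xs (xs (2*j)) (xs (2*j+1)))" for xs
    unfolding p_def joint_dens_def F_def K0_def
    by (rule reindex[where G = "\<lambda>l i i'. pd xs l (xs i) (xs i')"])
  have Fmeas: "(\<lambda>xs. F j xs (xs (2*j)) (xs (2*j+1))) \<in> borel_measurable (PiM I (\<lambda>_. lborel :: 'a measure))"
    if "j < K0" for j I
    unfolding F_def
    by (rule pd_meas[OF comp_meas comp_meas comp_meas]) (use lay_props that in \<open>auto simp: K0_def\<close>)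
  have int: "(\<integral>\<^sup>+ xs. ennreal (indicator (PiE {..<2*K0} (\<lambda>_. X)) xs * (\<Prod>j<K0. F j xs (xs (2*j)) (xs (2*j+1))))
           \<partial>PiM {..<2*K0} (\<lambda>_. lborel)) = 1"
  proof (rule prod_integral[where K0 = K0])
    fix j and xs ys :: "nat \<Rightarrow> 'a" assume j: "j < K0" and a: "\<And>i. i < 2 * j \<Longrightarrow> xs i = ys i"
    have "Nb N (lay N j - 1) \<le> j" using lay_props(3) j by (simp add: K0_def)
    then show "F j xs = F j ys" unfolding F_def using a by (intro pd_dep) auto
  next
    fix j xs a b show "0 \<le> F j xs a b" by (simp add: F_def pd_nonneg)
  next
    fix j K assume "j < K" "K \<le> K0"
    then show "(\<lambda>xs. F j xs (xs (2*j)) (xs (2*j+1))) \<in> borel_measurable (PiM {..<2*K} (\<lambda>_. lborel))"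
      by (intro Fmeas) simp
  next
    fix j and xs :: "nat \<Rightarrow> 'a" assume j: "j < K0"
    show "(\<lambda>z. F j xs (fst z) (snd z)) \<in> borel_measurable lborel"
      unfolding F_def
      using pd_meas[of "\<lambda>_. xs" "lborel :: ('a \<times> 'a) measure" fst snd "lay N j"] lay_props(2)[of j N L] j
      by (simp add: borel_measurable_continuous_onI continuous_on_fst continuous_on_snd K0_def)
  next
    fix j and xs :: "nat \<Rightarrow> 'a" assume j: "j < K0"
    show "(\<integral>\<^sup>+ z \<in> X \<times> X. ennreal (F j xs (fst z) (snd z)) \<partial>lborel) = 1"
      unfolding F_def using pd_int1 lay_props(2)[of j N L] j by (simp add: K0_def)
  qed (use X_sets in simp_all)
  have pm: "p \<in> borel_measurable M"
    unfolding M_def p_eq[abs_def] K0_def[symmetric]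
    by (intro borel_measurable_prod Fmeas) simp
  have p0: "p xs \<ge> 0" for xs unfolding p_eq F_def by (intro prod_nonneg) (simp add: pd_nonneg)
  have Xm: "Xbar \<in> sets M" unfolding Xbar_def M_def using X_sets by (intro sets_PiM_I_finite) auto
  define g where "g xs = indicator Xbar xs * p xs" for xs
  have gm: "g \<in> borel_measurable M" unfolding g_def using pm Xm by measurable
  have g0: "g xs \<ge> 0" for xs using p0 by (simp add: g_def)
  have gint: "(\<integral>\<^sup>+ xs. ennreal (g xs) \<partial>M) = ennreal 1"
    using int unfolding g_def M_def Xbar_def p_eq K0_def by simp
  have "integrable M g \<and> integral\<^sup>L M g = 1"
    using nn_integral_eq_integrable[of g M 1] gm g0 gint by simp
  then have I1: "set_integrable M Xbar p" and I2: "(LINT xs:Xbar|M. p xs) = 1"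
    unfolding set_integrable_def set_lebesgue_integral_def g_def by simp_all
  have "emeasure (density M (\<lambda>xs. ennreal (g xs))) (space M) = (\<integral>\<^sup>+ xs. ennreal (g xs) * indicator (space M) xs \<partial>M)"
    by (rule emeasure_density) (use gm in simp_all)
  also have "\<dots> = (\<integral>\<^sup>+ xs. ennreal (g xs) \<partial>M)" by (rule nn_integral_cong) simp
  finally have "prob_space (density M (\<lambda>xs. ennreal (g xs)))"
    using gint by (intro prob_spaceI) simp
  with I1 I2 show ?thesis by (simp add: g_def)
qed


end
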